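(* Let $A\in\mathbb{R}^{n\times n}$ have all eigenvalues in the open unit disk and let $B\in\mathbb{R}^{n\times m}$ be known. Let $N\geq n$ and for $i=1,\dots,N$ let $x_{i,1},x_{i,2}\in\mathbb{R}^{n}$, $u_{i,1}\in\mathbb{R}^{m}$ satisfy $x_{i,2}=Ax_{i,1}+Bu_{i,1}$. Put $X_{N,1}:=(x_{1,1},\dots,x_{N,1})^{\top}$, $X_{N,2}:=(x_{1,2},\dots,x_{N,2})^{\top}$ (in $\mathbb{R}^{N\times n}$), $U_{N,1}:=(u_{1,1},\dots,u_{N,1})^{\top}\in\mathbb{R}^{N\times m}$, $Z_{B_{N,1}}:=B^{\top}X_{N,1}^{\top}$, $U_{B_{N,1}}:=U_{N,1}B^{\top}$, and let $Z_{N,2}\in\mathbb{R}^{N\times n}$ be a solution of $X_{N,2}X_{N,1}^{\top}=X_{N,1}Z_{N,2}^{\top}+U_{N,1}Z_{B_{N,1}}$. Let $\hat{A}\in\mathbb{R}^{r\times r}$, $\hat{B}\in\mathbb{R}^{r\times m}$, $\hat{C}\in\mathbb{R}^{n\times r}$, and assume: (a1) $(X_{N,1}^{\dagger}Z_{N,2},X_{N,1}^{\dagger}X_{N,1})$ is a regular matrix pencil; (a2) the spectra of $(X_{N,1}^{\dagger}Z_{N,2},X_{N,1}^{\dagger}X_{N,1})$ and $(I_r,\hat{A})$ are disjoint; (a3) $(X_{N,1}^{\dagger}(X_{N,2}-U_{B_{N,1}}),X_{N,1}^{\dagger}X_{N,1})$ is a regular matrix pencil; (a4) the spectra of $(X_{N,1}^{\dagger}(X_{N,2}-U_{B_{N,1}}),X_{N,1}^{\dagger}X_{N,1})$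 and $(I_r,\hat{A})$ are disjoint; (A2) every eigenvalue $\lambda$ of $\hat{A}$ satisfies $0<|\lambda|<1$; (b2) $\operatorname{rank}X_{N,1}=n$. Let $P,Q\in\mathbb{R}^{r\times r}$ be the solutions of $\hat{A}P\hat{A}^{\top}+\hat{B}\hat{B}^{\top}=P$ and $\hat{A}^{\top}Q\hat{A}+\hat{C}^{\top}\hat{C}=Q$. Let $R,S\in\mathbb{R}^{n\times r}$ satisfy $$X_{N,1}^{\dagger}Z_{N,2}R\hat{A}^{\top}+X_{N,1}^{\dagger}Z_{B_{N,1}}^{\top}\hat{B}^{\top}=X_{N,1}^{\dagger}X_{N,1}R,\qquad X_{N,1}^{\dagger}(X_{N,2}-U_{B_{N,1}})S\hat{A}-X_{N,1}^{\dagger}X_{N,1}\hat{C}=X_{N,1}^{\dagger}X_{N,1}S,$$ and set $S_B:=B^{\top}S$. Define $$\tilde{\nabla}_{\hat{A}}f:=2\big(Q\hat{A}P+(S^{\top}R-S_{B}^{\top}\hat{B}^{\top})(\hat{A}^{\dagger})^{\top}\big),\quad \tilde{\nabla}_{\hat{B}}f:=2(S_{B}^{\top}+Q\hat{B}),\quad \tilde{\nabla}_{\hat{C}}f:=2(\hat{C}P-R).$$ Let $R_*,S_*\in\mathbb{R}^{n\times r}$ be the solutions of $AR_*\hat{A}^{\top}+B\hat{B}^{\top}=R_*$ and $A^{\top}S_*\hat{A}-\hat{C}=S_*$. Then $$\tilde{\nabla}_{\hat{A}}f=\nabla_{\hat{A}}f=2(Q\hat{A}P+S_*^{\top}AR_*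 ),\quad \tilde{\nabla}_{\hat{B}}f=\nabla_{\hat{B}}f=2(S_*^{\top}B+Q\hat{B}),\quad \tilde{\nabla}_{\hat{C}}f=\nabla_{\hat{C}}f=2(\hat{C}P-R_* ).$$
   Context: $M^{\dagger}$ denotes the Moore–Penrose pseudoinverse. A pair $(M,K)$ of square matrices of equal size is a regular matrix pencil if $\det(M-\lambda K)$ is not identically zero in $\lambda$; its spectrum is the set of $\lambda\in\mathbb{C}$ with $\det(M-\lambda K)=0$, together with $\infty$ if $K$ is singular. The spectrum of $(I_r,\hat A)$ is the set of $\lambda\in\mathbb{C}$ with $\det(I_r-\lambda\hat A)=0$ (plus $\infty$ if $\hat A$ is singular). Background: for the system $x_{k+1}=Ax_k+Bu_k$, $y_k=x_k$ with transfer function $H(z)=(zI_n-A)^{-1}B$ and a reduced model with $H_r(z)=\hat{C}(zI_r-\hat{A})^{-1}\hat{B}$, $\hat A$ stable, $\|H-H_r\|_{h^2}^2$ equals a constant plus $f(\hat{A},\hat{B},\hat{C})=\operatorname{tr}(\hat{C}P\hat{C}^{\top})-2\operatorname{tr}(R_*\hat{C}^{\top})$, whose entrywise gradients are known (Van Dooren et al.; Bunse-Gerstner et al.) to be $2(Q\hat{A}P+S_*^{\top}AR_* )$, $2(S_*^{\top}B+Q\hat{B})$, $2(\hat{C}P-R_* )$. In this setting $B$ is known, so $Z_{B_{N,1}}$, $U_{B_{N,1}}$ and $S_B$ are computed directly from $B$. *)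

theory Defs
  imports "HOL-Analysis.Analysis"
begin

definition cmat :: "real^'c^'r \<Rightarrow> complex^'c^'r" where
  "cmat M = (\<chi> i j. complex_of_real (M $ i $ j))"

definition eigenvalues :: "real^'n^'n \<Rightarrow> complex set" where
  "eigenvalues A = {z. det (mat z - cmat A) = 0}"

definition pencil_det :: "real^'n^'n \<Rightarrow> real^'n^'n \<Rightarrow> complex \<Rightarrow> complex" where
  "pencil_det M K z = det (cmat M - (\<chi> i j. z * cmat K $ i $ j))"

definition regular_pencil :: "real^'n^'n \<Rightarrow> real^'n^'n \<Rightarrow> bool" where
  "regular_pencil M K \<longleftrightarrow> (\<exists>z. pencil_det M K z \<noteq> 0)"

text \<open>Spectrum of a pencil in the extended complex plane; None stands for infinity.\<close>
definition pencil_spectrum :: "real^'n^'n \<Rightarrow> real^'n^'n \<Rightarrow> complex option set" where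
  "pencil_spectrum M K =
     Some ` {z. pencil_det M K z = 0} \<union> (if det K = 0 then {None} else {})"

definition is_pinv :: "real^'c^'r \<Rightarrow> real^'r^'c \<Rightarrow> bool" where
  "is_pinv M X \<longleftrightarrow> M ** X ** M = M \<and> X ** M ** X = X \<and>
     transpose (M ** X) = M ** X \<and> transpose (X ** M) = X ** M"

definition pinv :: "real^'c^'r \<Rightarrow> real^'r^'c" where
  "pinv M = (THE X. is_pinv M X)"

end

theory Submission
  imports Defs "HOL-Computational_Algebra.Fundamental_Theorem_Algebra"
begin


definition sm :: "'a::comm_ring_1 \<Rightarrow> 'a^'c^'r \<Rightarrow> 'a^'c^'r" where
  "sm c X = (\<chi> i j. c * X $ i $ j)"

lemma matrix_sub_ldistrib: "(A::'a::comm_ring_1^'n^'m) ** (B - C) = A ** B - A ** C"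
  by (simp add: matrix_matrix_mult_def vec_eq_iff sum_subtractf right_diff_distrib)

lemma matrix_sub_rdistrib: "((A::'a::comm_ring_1^'n^'m) - B) ** C = A ** C - B ** C"
  by (simp add: matrix_matrix_mult_def vec_eq_iff sum_subtractf left_diff_distrib)

lemma matrix_add_rdistrib: "((A::'a::comm_ring_1^'n^'m) + B) ** C = A ** C + B ** C"
  by (simp add: matrix_matrix_mult_def vec_eq_iff sum.distrib distrib_right)

lemma mat_mult_left: "mat c ** (X::'a::comm_ring_1^'n^'m) = sm c X"
  unfolding matrix_matrix_mult_def mat_def sm_def
  by (auto simp: vec_eq_iff if_distrib if_distribR sum.delta'[OF finite] cong: if_cong)

lemma mat_mult_right: "(X::'a::comm_ring_1^'n^'m) ** mat c = sm c X"
  unfolding matrix_matrix_mult_def mat_def sm_def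
  by (auto simp: vec_eq_iff if_distrib if_distribR sum.delta'[OF finite] mult.commute cong: if_cong)

lemma sm_mult_left: "sm c (X::'a::comm_ring_1^'n^'m) ** Y = sm c (X ** Y)"
  by (simp add: sm_def matrix_matrix_mult_def vec_eq_iff sum_distrib_left mult.assoc)

lemma sm_mult_right: "(X::'a::comm_ring_1^'n^'m) ** sm c Y = sm c (X ** Y)"
  by (simp add: sm_def matrix_matrix_mult_def vec_eq_iff sum_distrib_left mult_ac)

lemma mat_add: "mat (a + b) = (mat a + mat b :: 'a::comm_ring_1^'n^'n)"
  by (simp add: mat_def vec_eq_iff)

lemma mat_uminus: "mat (- a) = (- mat a :: 'a::comm_ring_1^'n^'n)"
  by (simp add: mat_def vec_eq_iff)

lemma mat_mult_mat: "mat a ** mat b = (mat (a * b) :: 'a::comm_ring_1^'n^'n)"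
  unfolding mat_mult_left by (simp add: sm_def mat_def vec_eq_iff)

lemma mat_comm: "mat c ** (X::'a::comm_ring_1^'n^'n) = X ** mat c"
  by (simp add: mat_mult_left mat_mult_right)

lemma sm_1: "sm 1 X = X" by (simp add: sm_def vec_eq_iff)

lemma mat_of_real_mult: "mat (complex_of_real c) ** (X::complex^'n^'m) = c *\<^sub>R X"
proof -
  have "\<And>i j. (mat (complex_of_real c) ** X) $ i $ j = (c *\<^sub>R X) $ i $ j"
    by (simp only: mat_mult_left sm_def vector_scaleR_component vec_lambda_beta) (simp add: scaleR_conv_of_real)
  then show ?thesis by (simp add: vec_eq_iff)
qed

lemma cmat_mult: "cmat (X ** Y) = cmat X ** cmat Y"
  by (simp add: cmat_def matrix_matrix_mult_def vec_eq_iff)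

lemma cmat_diff: "cmat (X - Y) = cmat X - cmat Y"
  by (simp add: cmat_def vec_eq_iff)

lemma cmat_mat: "cmat (mat c) = mat (complex_of_real c)"
  by (simp add: cmat_def mat_def vec_eq_iff)

lemma cmat_0_iff: "cmat X = 0 \<longleftrightarrow> X = 0"
  by (simp add: cmat_def vec_eq_iff)

lemma cmat_transpose: "cmat (transpose X) = transpose (cmat X)"
  by (simp add: cmat_def transpose_def vec_eq_iff)

lemma det_cmat: "det (cmat X) = complex_of_real (det X)"
  by (simp add: det_def cmat_def)

lemma det_neg: "det (- (X::'a::comm_ring_1^'n^'n)) = (-1) ^ CARD('n) * det X"
proof -
  have "\<And>p. (\<Prod>i\<in>UNIV. (- X) $ i $ p i) = (-1) ^ CARD('n) * (\<Prod>i\<in>UNIV. X $ i $ p i)"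
    by (simp add: prod.distrib[symmetric] prod_constant[symmetric] del: prod_constant)
  then show ?thesis by (simp add: det_def sum_distrib_left mult_ac)
qed



lemma mat_swap: "(X::'a::comm_ring_1^'n^'m) ** (mat c ** Y) = mat c ** (X ** Y)"
  by (simp add: mat_mult_left sm_mult_right)

lemma matrix_neg_left: "(- (A::'a::comm_ring_1^'n^'m)) ** B = - (A ** B)"
  by (simp add: matrix_matrix_mult_def vec_eq_iff sum_negf)

fun mpow :: "'a::comm_ring_1^'n^'n \<Rightarrow> nat \<Rightarrow> 'a^'n^'n" where
  "mpow X 0 = mat 1"
| "mpow X (Suc k) = X ** mpow X k"

definition poly_mat :: "'a::comm_ring_1 poly \<Rightarrow> 'a^'n^'n \<Rightarrow> 'a^'n^'n" where
  "poly_mat p X = fold_coeffs (\<lambda>a Y. mat a + X ** Y) p 0"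

lemma poly_mat_0[simp]: "poly_mat 0 X = 0"
  by (simp add: poly_mat_def)

lemma poly_mat_pCons: "poly_mat (pCons a p) X = mat a + X ** poly_mat p X"
proof (cases "p = 0")
  case True
  then show ?thesis
    by (cases "a = 0") (simp_all add: poly_mat_def fold_coeffs_pCons_coeff_not_0_eq)
next
  case False
  then show ?thesis by (simp add: poly_mat_def fold_coeffs_pCons_not_0_0_eq)
qed

lemma poly_mat_add: "poly_mat (p + q) X = poly_mat p X + poly_mat q X"
proof (induction p q rule: poly_induct2)
  case 0
  then show ?case by simp
next
  case (pCons a p b q)
  then show ?case by (simp add: poly_mat_pCons mat_add matrix_add_ldistrib algebra_simps)
qed

lemma poly_mat_smult: "poly_mat (smult c p) X = mat c ** poly_mat p X"
proof (induction p)
  case 0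
  then show ?case by simp
next
  case (pCons a p)
  have "mat (c * a) + X ** (mat c ** poly_mat p X) = mat c ** (mat a + X ** poly_mat p X)"
    by (simp add: matrix_add_ldistrib mat_mult_mat mat_swap)
  then show ?case using pCons by (simp add: poly_mat_pCons)
qed

lemma poly_mat_mult: "poly_mat (p * q) X = poly_mat p X ** poly_mat q X"
proof (induction p)
  case 0
  then show ?case by simp
next
  case (pCons a p)
  have "poly_mat (pCons a p * q) X = poly_mat (smult a q + pCons 0 (p * q)) X" by simp
  also have "\<dots> = mat a ** poly_mat q X + (mat 0 + X ** poly_mat (p * q) X)"
    by (simp only: poly_mat_add poly_mat_smult poly_mat_pCons)
  also have "\<dots> = mat a ** poly_mat q X + X ** (poly_mat p X ** poly_mat q X)"
    using pCons by simp
  also have "\<dots> = (mat a + X ** poly_mat p X) ** poly_mat q X"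
    by (simp only: matrix_add_rdistrib matrix_mul_assoc)
  finally show ?case by (simp only: poly_mat_pCons)
qed

lemma poly_mat_lin: "poly_mat [:-r, 1:] X = X - mat r"
  by (simp add: poly_mat_pCons mat_uminus)

lemma poly_mat_monom: "poly_mat (monom c k) X = mat c ** mpow X k"
proof (induction k)
  case 0
  then show ?case by (simp add: monom_0 poly_mat_pCons)
next
  case (Suc k)
  then show ?case
    by (simp add: monom_Suc poly_mat_pCons mat_swap)
qed

lemma poly_mat_sum: "finite S \<Longrightarrow> poly_mat (sum f S) X = (\<Sum>i\<in>S. poly_mat (f i) X)"
  by (induction S rule: finite_induct) (simp_all add: poly_mat_add)

lemma annih_exists: "\<exists>p::complex poly. p \<noteq> 0 \<and> poly_mat p (M::complex^'n^'n) = 0"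
proof (cases "inj_on (mpow M) {..DIM(complex^'n^'n)}")
  case False
  then obtain i j where ij: "i \<noteq> j" "mpow M i = mpow M j"
    unfolding inj_on_def by blast
  define p where "p = monom (1::complex) i + monom (-1) j"
  have "coeff p i = 1" using ij by (simp add: p_def coeff_monom)
  then have "p \<noteq> 0" by auto
  moreover have "poly_mat p M = 0"
    using ij by (simp add: p_def poly_mat_add poly_mat_monom mat_uminus matrix_neg_left)
  ultimately show ?thesis by blast
next
  case True
  let ?S = "mpow M ` {..DIM(complex^'n^'n)}"
  have "card ?S = Suc DIM(complex^'n^'n)" using True by (simp add: card_image)
  then have "dependent ?S" by (intro dependent_biggerset) simp
  then have "\<exists>T u. finite T \<and> T \<subseteq> ?S \<and> (\<Sum>v\<in>T. u v *\<^sub>R v) = 0 \<and> (\<exists>v\<in>T. u v \<noteq> 0)"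
    by (simp only: real_vector.dependent_explicit)
  then obtain T u v0 where T: "finite T" "T \<subseteq> ?S" "(\<Sum>v\<in>T. u v *\<^sub>R v) = 0"
    and v0: "v0 \<in> T" "u v0 \<noteq> 0"
    by blast
  define K where "K = {k\<in>{..DIM(complex^'n^'n)}. mpow M k \<in> T}"
  have finK: "finite K" by (simp add: K_def)
  have KT: "mpow M ` K = T" using T(2) by (auto simp: K_def)
  have injK: "inj_on (mpow M) K" using True by (rule inj_on_subset) (auto simp: K_def)
  define p where "p = (\<Sum>k\<in>K. monom (complex_of_real (u (mpow M k))) k)"
  obtain k0 where k0: "k0 \<in> K" "mpow M k0 = v0" using v0 KT by blast
  have "coeff p k0 = (\<Sum>k\<in>K. if k = k0 then complex_of_real (u (mpow M k)) else 0)"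
    by (simp add: p_def coeff_sum coeff_monom)
  also have "\<dots> = complex_of_real (u v0)"
    using k0 finK by (simp add: sum.delta)
  finally have "p \<noteq> 0" using v0 by auto
  have "poly_mat p M = (\<Sum>k\<in>K. u (mpow M k) *\<^sub>R mpow M k)"
    by (simp add: p_def poly_mat_sum[OF finK] poly_mat_monom mat_of_real_mult)
  also have "\<dots> = (\<Sum>v\<in>T. u v *\<^sub>R v)"
    using sum.reindex[OF injK, of "\<lambda>v. u v *\<^sub>R v"] KT by simp
  finally have "poly_mat p M = 0" using T(3) by simp
  then show ?thesis using \<open>p \<noteq> 0\<close> by blast
qed



lemma poly_mat_1: "poly_mat 1 X = mat 1"
  by (simp add: one_pCons poly_mat_pCons)

lemma factor_step:
  fixes cM :: "complex^'n^'n" and cK :: "complex^'r^'r" and F :: "complex^'r^'n"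
  assumes e: "cM ** F ** cK = F" and z: "(cM - mat r) ** F = 0"
    and h: "det (cM - mat r) = 0 \<Longrightarrow> det (mat 1 - sm r cK) \<noteq> 0"
  shows "F = 0"
proof (cases "det (cM - mat r) = 0")
  case False
  then have "invertible (cM - mat r)" by (simp add: invertible_det_nz)
  then obtain B where B: "B ** (cM - mat r) = mat 1" by (auto simp: invertible_left_inverse)
  have "F = (B ** (cM - mat r)) ** F" by (simp add: B)
  also have "\<dots> = 0" by (simp add: matrix_mul_assoc[symmetric] z)
  finally show ?thesis .
next
  case True
  then have "invertible (mat 1 - sm r cK)" using h by (simp add: invertible_det_nz)
  then obtain B where B: "(mat 1 - sm r cK) ** B = mat 1" by (auto simp: invertible_right_inverse)
  have "cM ** F = mat r ** F" using z by (simp add: matrix_sub_rdistrib)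
  then have "cM ** F = sm r F" by (simp add: mat_mult_left)
  then have "F = sm r (F ** cK)" using e by (simp add: sm_mult_left)
  then have FN: "F ** (mat 1 - sm r cK) = 0"
    by (simp add: matrix_sub_ldistrib sm_mult_right)
  have "F = F ** ((mat 1 - sm r cK) ** B)" by (simp add: B)
  also have "\<dots> = 0" by (simp add: matrix_mul_assoc FN)
  finally show ?thesis .
qed

lemma stein_zero:
  fixes M :: "real^'n^'n" and K :: "real^'r^'r" and D :: "real^'r^'n"
  assumes e: "M ** D ** K = D"
    and h: "\<forall>r. det (cmat M - mat r) = 0 \<longrightarrow> det (mat 1 - (\<chi> i j. r * cmat K $ i $ j)) \<noteq> 0"
  shows "D = 0"
proof -
  let ?M = "cmat M" and ?K = "cmat K"
  obtain p :: "complex poly" where p: "p \<noteq> 0" "poly_mat p ?M = 0"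
    using annih_exists by blast
  obtain root where root: "smult (lead_coeff p) (\<Prod>i<degree p. [:-root i, 1:]) = p"
    by (rule complex_poly_decompose')
  have lc: "lead_coeff p \<noteq> 0" using p by simp
  have "mat (lead_coeff p) ** poly_mat (\<Prod>i<degree p. [:-root i, 1:]) ?M = 0"
    using p(2) root poly_mat_smult by metis
  then have "mat (1 / lead_coeff p) ** (mat (lead_coeff p) ** poly_mat (\<Prod>i<degree p. [:-root i, 1:]) ?M) = 0"
    by simp
  then have P0: "poly_mat (\<Prod>i<degree p. [:-root i, 1:]) ?M = 0"
    using lc by (simp add: matrix_mul_assoc mat_mult_mat)
  have comm: "\<And>r. ?M ** (?M - mat r) = (?M - mat r) ** ?M"
    by (simp add: matrix_sub_ldistrib matrix_sub_rdistrib mat_comm)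
  have claim: "\<forall>F. ?M ** F ** ?K = F \<longrightarrow> poly_mat (\<Prod>i<k. [:-root i, 1:]) ?M ** F = 0 \<longrightarrow> F = 0" for k
  proof (induction k)
    case 0
    then show ?case by (simp add: poly_mat_1)
  next
    case (Suc k)
    show ?case
    proof (intro allI impI)
      fix F :: "complex^'r^'n"
      assume F: "?M ** F ** ?K = F"
        and Z: "poly_mat (\<Prod>i<Suc k. [:-root i, 1:]) ?M ** F = 0"
      let ?G = "(?M - mat (root k)) ** F"
      have "?M ** ?G ** ?K = (?M - mat (root k)) ** (?M ** F ** ?K)"
        by (simp add: matrix_mul_assoc comm)
      then have G1: "?M ** ?G ** ?K = ?G" using F by simp
      have "poly_mat (\<Prod>i<k. [:-root i, 1:]) ?M ** ?G = 0"
      proof -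
        have "poly_mat (\<Prod>i<Suc k. [:-root i, 1:]) ?M = poly_mat (\<Prod>i<k. [:-root i, 1:]) ?M ** (?M - mat (root k))"
          by (simp only: prod.lessThan_Suc poly_mat_mult poly_mat_lin)
        then show ?thesis using Z by (simp add: matrix_mul_assoc)
      qed
      then have "?G = 0" using Suc G1 by blast
      then show "F = 0"
        using factor_step[OF F, of "root k"] h by (simp add: sm_def)
    qed
  qed
  have "?M ** cmat D ** ?K = cmat D" using e by (simp add: cmat_mult[symmetric])
  then have "cmat D = 0" using claim[of "degree p"] P0 by simp
  then show ?thesis by (simp add: cmat_0_iff)
qed



lemma pinv_unique:
  fixes M :: "real^'c^'r"
  assumes "is_pinv M X" "is_pinv M Y" shows "X = Y"
proof -
  have X: "M ** X ** M = M" "X ** M ** X = X" "transpose (M ** X) = M ** X" "transpose (X ** M) = X ** M"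
    using assms(1) by (auto simp: is_pinv_def)
  have Y: "M ** Y ** M = M" "Y ** M ** Y = Y" "transpose (M ** Y) = M ** Y" "transpose (Y ** M) = Y ** M"
    using assms(2) by (auto simp: is_pinv_def)
  have XM: "X ** M = Y ** M"
  proof -
    have "X ** M = transpose M ** transpose X" using X(4) by (metis matrix_transpose_mul)
    also have "\<dots> = transpose (M ** Y ** M) ** transpose X" using Y(1) by simp
    also have "\<dots> = transpose (Y ** M) ** transpose (X ** M)"
      by (simp add: matrix_transpose_mul matrix_mul_assoc)
    also have "\<dots> = Y ** (M ** X ** M)" using X(4) Y(4) by (simp add: matrix_mul_assoc)
    also have "\<dots> = Y ** M" using X(1) by simp
    finally show ?thesis .
  qed
  have MX: "M ** X = M ** Y"
  proof -
    have "M ** X = transpose X ** transpose M" using X(3) by (metis matrix_transpose_mul)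
    also have "\<dots> = transpose X ** transpose (M ** Y ** M)" using Y(1) by simp
    also have "\<dots> = transpose (M ** X) ** transpose (M ** Y)"
      by (simp add: matrix_transpose_mul matrix_mul_assoc)
    also have "\<dots> = (M ** X ** M) ** Y" using X(3) Y(3) by (simp add: matrix_mul_assoc)
    also have "\<dots> = M ** Y" using X(1) by simp
    finally show ?thesis .
  qed
  have "X = X ** (M ** X)" using X(2) by (simp add: matrix_mul_assoc)
  also have "\<dots> = (X ** M) ** Y" using MX by (simp add: matrix_mul_assoc)
  also have "\<dots> = Y" using XM Y(2) by simp
  finally show ?thesis .
qed

lemma pinv_eq: "is_pinv M X \<Longrightarrow> pinv M = X"
  unfolding pinv_def using pinv_unique by blast

lemma pinv_invertible:
  fixes M :: "real^'n^'n"
  assumes "invertible M" shows "pinv M ** M = mat 1"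
proof -
  obtain B where B: "B ** M = mat 1" "M ** B = mat 1" using assms by (auto simp: invertible_def)
  have "is_pinv M B" using B by (simp add: is_pinv_def matrix_mul_assoc[symmetric])
  then show ?thesis using B pinv_eq by metis
qed

lemma pinv_full_col:
  fixes X1 :: "real^'n^'N"
  assumes inj: "inj ((*v) X1)" shows "pinv X1 ** X1 = mat 1"
proof -
  define H where "H = transpose X1 ** X1"
  have dot: "x \<bullet> (H *v x) = (X1 *v x) \<bullet> (X1 *v x)" for x
    by (simp add: H_def matrix_vector_mul_assoc[symmetric] dot_lmul_matrix[symmetric] inner_commute)
  have "inj ((*v) H)"
  proof (rule injI)
    fix x y assume "H *v x = H *v y"
    then have "H *v (x - y) = 0" by (simp add: matrix_vector_mult_diff_distrib)
    then have "(X1 *v (x - y)) \<bullet> (X1 *v (x - y)) = 0" using dot[of "x - y"] by simp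
    then have "X1 *v (x - y) = X1 *v 0" by simp
    then have "x - y = 0" using inj by (meson injD)
    then show "x = y" by simp
  qed
  then obtain Hi where Hi1: "Hi ** H = mat 1" using matrix_left_invertible_injective by blast
  then have Hi2: "H ** Hi = mat 1" using matrix_left_right_inverse by blast
  have HT: "transpose H = H" by (simp add: H_def matrix_transpose_mul)
  have "transpose Hi ** H = mat 1" using Hi2 HT by (metis matrix_transpose_mul transpose_mat)
  then have HiT: "transpose Hi = Hi"
    by (metis Hi2 matrix_mul_assoc matrix_mul_lid matrix_mul_rid)
  define G where "G = Hi ** transpose X1"
  have GX: "G ** X1 = mat 1" using Hi1 by (simp add: G_def H_def matrix_mul_assoc)
  have "is_pinv X1 G"
    unfolding is_pinv_def
  proof (intro conjI)
    show "X1 ** G ** X1 = X1" using GX by (simp add: matrix_mul_assoc[symmetric])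
    show "G ** X1 ** G = G" using GX by simp
    show "transpose (X1 ** G) = X1 ** G"
      using HiT by (simp add: G_def matrix_transpose_mul matrix_mul_assoc)
    show "transpose (G ** X1) = G ** X1" using GX by simp
  qed
  then show ?thesis using GX pinv_eq by metis
qed



lemma spec_hyp:
  fixes M :: "real^'n^'n" and K :: "real^'k^'k"
  assumes "pencil_spectrum M (mat 1) \<inter> pencil_spectrum (mat 1) K = {}"
  shows "\<forall>r. det (cmat M - mat r) = 0 \<longrightarrow> det (cmat (mat 1) - (\<chi> i j. r * cmat K $ i $ j)) \<noteq> 0"
proof (intro allI impI)
  fix r assume "det (cmat M - mat r) = 0"
  moreover have "(\<chi> i j. r * cmat (mat 1 :: real^'n^'n) $ i $ j) = mat r"
    by (simp add: cmat_def mat_def vec_eq_iff)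
  ultimately have "pencil_det M (mat 1) r = 0" by (simp add: pencil_det_def)
  then have "Some r \<in> pencil_spectrum M (mat 1)" by (simp add: pencil_spectrum_def)
  then have "Some r \<notin> pencil_spectrum (mat 1) K" using assms by blast
  then have "pencil_det (mat 1) K r \<noteq> 0" by (auto simp: pencil_spectrum_def)
  then show "det (cmat (mat 1) - (\<chi> i j. r * cmat K $ i $ j)) \<noteq> 0" by (simp add: pencil_det_def)
qed

lemma spec_hyp_T:
  fixes M :: "real^'n^'n" and K :: "real^'k^'k"
  assumes "pencil_spectrum M (mat 1) \<inter> pencil_spectrum (mat 1) K = {}"
  shows "\<forall>r. det (cmat M - mat r) = 0 \<longrightarrow> det (mat 1 - (\<chi> i j. r * cmat (transpose K) $ i $ j)) \<noteq> 0"
proof (intro allI impI)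
  fix r assume "det (cmat M - mat r) = 0"
  then have "det (cmat (mat 1) - (\<chi> i j. r * cmat K $ i $ j)) \<noteq> 0" using spec_hyp[OF assms] by blast
  moreover have "mat 1 - (\<chi> i j. r * cmat (transpose K) $ i $ j) = transpose (cmat (mat 1) - (\<chi> i j. r * cmat K $ i $ j))"
    by (simp add: cmat_def transpose_def mat_def vec_eq_iff)
  ultimately show "det (mat 1 - (\<chi> i j. r * cmat (transpose K) $ i $ j)) \<noteq> 0" by (simp add: det_transpose)
qed

lemma spec_hyp': 
  fixes M :: "real^'n^'n" and K :: "real^'k^'k"
  assumes "pencil_spectrum M (mat 1) \<inter> pencil_spectrum (mat 1) K = {}"
  shows "\<forall>r. det (cmat M - mat r) = 0 \<longrightarrow> det (mat 1 - (\<chi> i j. r * cmat K $ i $ j)) \<noteq> 0"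
  using spec_hyp[OF assms] by (simp add: cmat_mat)

theorem theorem2:
  fixes A :: "real^'n^'n" and B :: "real^'m^'n"
    and X1 X2 :: "real^'n^'N" and U1 :: "real^'m^'N"
    and Z2 :: "real^'n^'N"
    and Ahat :: "real^'r^'r" and Bhat :: "real^'m^'r" and Chat :: "real^'r^'n"
    and P Q :: "real^'r^'r"
    and R S Rs Ss :: "real^'r^'n"
  assumes A_stable: "\<forall>z\<in>eigenvalues A. cmod z < 1"
    and N_ge: "CARD('N) \<ge> CARD('n)"
    and data: "\<forall>i. X2 $ i = A *v (X1 $ i) + B *v (U1 $ i)"
    and Z2_eq: "X2 ** transpose X1 = X1 ** transpose Z2 + U1 ** (transpose B ** transpose X1)"
    and a1: "regular_pencil (pinv X1 ** Z2) (pinv X1 ** X1)"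
    and a2: "pencil_spectrum (pinv X1 ** Z2) (pinv X1 ** X1) \<inter> pencil_spectrum (mat 1) Ahat = {}"
    and a3: "regular_pencil (pinv X1 ** (X2 - U1 ** transpose B)) (pinv X1 ** X1)"
    and a4: "pencil_spectrum (pinv X1 ** (X2 - U1 ** transpose B)) (pinv X1 ** X1)
               \<inter> pencil_spectrum (mat 1) Ahat = {}"
    and A2: "\<forall>z\<in>eigenvalues Ahat. 0 < cmod z \<and> cmod z < 1"
    and b2: "rank X1 = CARD('n)"
    and P_eq: "Ahat ** P ** transpose Ahat + Bhat ** transpose Bhat = P"
    and Q_eq: "transpose Ahat ** Q ** Ahat + transpose Chat ** Chat = Q"
    and R_eq: "pinv X1 ** Z2 ** R ** transpose Ahat
               + pinv X1 ** transpose (transpose B ** transpose X1) ** transpose Bhat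
               = pinv X1 ** X1 ** R"
    and S_eq: "pinv X1 ** (X2 - U1 ** transpose B) ** S ** Ahat - pinv X1 ** X1 ** Chat
               = pinv X1 ** X1 ** S"
    and Rs_eq: "A ** Rs ** transpose Ahat + B ** transpose Bhat = Rs"
    and Ss_eq: "transpose A ** Ss ** Ahat - Chat = Ss"
  shows "2 *\<^sub>R (Q ** Ahat ** P + (transpose S ** R - transpose (transpose B ** S) ** transpose Bhat)
                     ** transpose (pinv Ahat))
           = 2 *\<^sub>R (Q ** Ahat ** P + transpose Ss ** A ** Rs)
       \<and> 2 *\<^sub>R (transpose (transpose B ** S) + Q ** Bhat) = 2 *\<^sub>R (transpose Ss ** B + Q ** Bhat)
       \<and> 2 *\<^sub>R (Chat ** P - R) = 2 *\<^sub>R (Chat ** P - Rs)"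
proof -
  have inj: "inj ((*v) X1)" using b2 full_rank_injective by blast
  have GX: "pinv X1 ** X1 = mat 1" by (rule pinv_full_col[OF inj])
  have X2e: "X2 = X1 ** transpose A + U1 ** transpose B"
    using data by (simp add: vec_eq_iff matrix_matrix_mult_def matrix_vector_mult_def transpose_def mult.commute)
  have "X1 ** (transpose A ** transpose X1) + U1 ** (transpose B ** transpose X1)
        = X1 ** transpose Z2 + U1 ** (transpose B ** transpose X1)"
    using Z2_eq by (simp add: X2e matrix_add_rdistrib matrix_mul_assoc)
  then have "X1 ** (transpose A ** transpose X1) = X1 ** transpose Z2" by simp
  then have "pinv X1 ** (X1 ** (transpose A ** transpose X1)) = pinv X1 ** (X1 ** transpose Z2)" by simp
  then have "transpose A ** transpose X1 = transpose Z2" by (simp add: matrix_mul_assoc GX)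
  then have Z2e: "Z2 = X1 ** A" by (metis matrix_transpose_mul transpose_transpose)
  have PZ: "pinv X1 ** Z2 = A" by (simp add: Z2e matrix_mul_assoc GX)
  have PX2: "pinv X1 ** (X2 - U1 ** transpose B) = transpose A" by (simp add: X2e matrix_mul_assoc GX)
  have PB: "pinv X1 ** transpose (transpose B ** transpose X1) = B"
    by (simp add: matrix_transpose_mul matrix_mul_assoc GX)
  have Req: "A ** R ** transpose Ahat + B ** transpose Bhat = R"
    using R_eq by (simp add: PZ GX PB matrix_mul_assoc[symmetric])
  have "A ** (R - Rs) ** transpose Ahat = R - Rs"
  proof -
    have r1: "A ** R ** transpose Ahat = R - B ** transpose Bhat" using Req by (simp add: eq_diff_eq)
    have r2: "A ** Rs ** transpose Ahat = Rs - B ** transpose Bhat" using Rs_eq by (simp add: eq_diff_eq)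
    show ?thesis by (simp add: matrix_sub_ldistrib matrix_sub_rdistrib r1 r2)
  qed
  then have "R - Rs = 0"
    by (rule stein_zero[OF _ spec_hyp_T[OF a2[unfolded PZ GX]]])
  then have RR: "R = Rs" by simp
  have Seq: "transpose A ** S ** Ahat - Chat = S"
    using S_eq by (simp add: PX2 GX matrix_mul_assoc[symmetric])
  have "transpose A ** (S - Ss) ** Ahat = S - Ss"
  proof -
    have r1: "transpose A ** S ** Ahat = S + Chat" using Seq by (simp add: diff_eq_eq)
    have r2: "transpose A ** Ss ** Ahat = Ss + Chat" using Ss_eq by (simp add: diff_eq_eq)
    show ?thesis by (simp add: matrix_sub_ldistrib matrix_sub_rdistrib r1 r2)
  qed
  then have "S - Ss = 0"
    by (rule stein_zero[OF _ spec_hyp'[OF a4[unfolded PX2 GX]]])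
  then have SS: "S = Ss" by simp
  have "0 \<notin> eigenvalues Ahat" using A2 by auto
  then have "det (- cmat Ahat) \<noteq> 0" by (simp add: eigenvalues_def)
  then have "det Ahat \<noteq> 0" by (simp add: det_neg det_cmat)
  then have "invertible Ahat" by (simp add: invertible_det_nz)
  then have PA: "pinv Ahat ** Ahat = mat 1" by (rule pinv_invertible)
  have "(transpose S ** R - transpose (transpose B ** S) ** transpose Bhat) ** transpose (pinv Ahat)
        = transpose S ** (R - B ** transpose Bhat) ** transpose (pinv Ahat)"
    by (simp add: matrix_transpose_mul matrix_sub_ldistrib matrix_mul_assoc)
  also have "\<dots> = transpose S ** (A ** R ** transpose Ahat) ** transpose (pinv Ahat)"
  proof -
    have r1: "A ** R ** transpose Ahat = R - B ** transpose Bhat" using Req by (simp add: eq_diff_eq)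
    show ?thesis by (simp only: r1)
  qed
  also have "\<dots> = transpose S ** A ** R ** transpose (pinv Ahat ** Ahat)"
    by (simp add: matrix_transpose_mul matrix_mul_assoc)
  also have "\<dots> = transpose Ss ** A ** Rs" using PA RR SS by simp
  finally have c1: "(transpose S ** R - transpose (transpose B ** S) ** transpose Bhat) ** transpose (pinv Ahat)
        = transpose Ss ** A ** Rs" .
  show ?thesis using c1 RR SS by (simp add: matrix_transpose_mul)
qed

end
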